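(* Assume (A7). Then for the iterates of D-MSSCA, for all $T>1$ and $\alpha\in(0,1)$, $$\sum_{t=1}^T\mathbb{E}[(\theta^t)^2]\le\frac{4\alpha^2\lambda_W^2}{(1-\lambda_W^2)^2}\sum_{t=1}^{T-1}\mathbb{E}\|\delta^t\|^2 .$$
   Context: Problem. Let $n,d\ge 1$. For $i\in\{1,\dots,n\}$ and each value of a random variable $\xi$, $f_i(\cdot,\xi):\mathbb{R}^d\to\mathbb{R}$ is differentiable (possibly non-convex); $u_i(x):=\mathbb{E}[f_i(x,\xi_i)]$ and $u(x):=\frac1n\sum_{i=1}^n u_i(x)$. The function $h:\mathbb{R}^d\to\mathbb{R}$ is convex (possibly non-smooth), $g:\mathbb{R}^d\to\mathbb{R}$ is convex, $\mathcal{X}:=\{x\in\mathbb{R}^d: g(x)\le 0\}$, and $\mathbb{1}_{\mathcal X}$ is its indicator function ($0$ on $\mathcal X$, $+\infty$ outside). Let $U:=u+h$ and $U^\star:=\min_{x\in\mathcal X}U(x)$. The $n$ agents communicate over a graph with vertex set $\{1,\dots,n\}$ and edge set $\mathcal E$ through a matrix $W\in\mathbb{R}^{n\times n}$; $\lambda_W:=\lambda_{\max}(W-\frac1n\mathbf 1_n\mathbf 1_n^\top)$. Algorithm D-MSSCA. Parameters: $\alpha,\beta\in(0,1)$, $\mu>0$, an initial batch size $b_0\in\mathbb N$. For each $i$, each $x'\in\mathbb{R}^d$ and each sample $\xi$, a surrogate $\hat f_i(\cdot,x',\xi):\mathbb{R}^d\to\mathbb{R}$ is used that is $\mu$-strongly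 convex and satisfies $\nabla_x\hat f_i(x',x',\xi)=\nabla f_i(x',\xi)$. Node $i$ draws samples $\xi_i^{1,1},\dots,\xi_i^{1,b_0}$ (with $\xi_i^1:=\xi_i^{1,1}$) and then $\xi_i^{t}$ for $t\ge2$. Initialization: $x_i^1=\bar x^1$ for all $i$, for a common point $\bar x^1\in\mathcal X$; $z_i^1=y_i^1=\frac1{b_0}\sum_{r=1}^{b_0}\nabla f_i(x_i^1,\xi_i^{1,r})$; $z_i^0:=0$ and $\nabla f_i(x_i^0,\xi_i^1):=0$. For $t\ge1$, each node $i$ computes $\tilde f_i(x):=\hat f_i(x,x_i^t,\xi_i^t)+(1-\beta)\langle z_i^{t-1}-\nabla f_i(x_i^{t-1},\xi_i^t),x-x_i^t\rangle$, $\hat x_i^t:=\arg\min_{x\in\mathcal X}\ \tilde f_i(x)+\langle y_i^t-z_i^t,x-x_i^t\rangle+h(x)$, $x_i^{t+1}:=\sum_{j=1}^nW_{ij}\big(x_j^t+\alpha(\hat x_j^t-x_j^t)\big)$, $z_i^{t+1}:=\nabla f_i(x_i^{t+1},\xi_i^{t+1})+(1-\beta)\big(z_i^t-\nabla f_i(x_i^t,\xi_i^{t+1})\big)$, $y_i^{t+1}:=\sum_{j=1}^nW_{ij}\big(y_j^t+z_j^{t+1}-z_j^t\big)$. Notation. $x^t,y^t,z^t,\hat x^t\in\mathbb{R}^{nd}$ are the stacked vectors $[x_1^t;\dots;x_n^t]$ etc.; $\bar x^t=\frac1n\sum_ix_i^t$, and similarly $\bar y^t,\bar z^t$. $\nabla\mathbf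 u(x^t):=[\nabla u_1(x_1^t);\dots;\nabla u_n(x_n^t)]$ and $\overline{\nabla u}(x^t):=\frac1n\sum_i\nabla u_i(x_i^t)$. Define $\theta^t:=\|x^t-(\mathbf 1_n\otimes I_d)\bar x^t\|$, $\delta^t:=\hat x^t-x^t$, $\phi^t:=\mathbb{E}\|\bar z^t-\overline{\nabla u}(x^t)\|^2$, $\upsilon^t:=\mathbb{E}\|z^t-\nabla\mathbf u(x^t)\|^2$, $\varepsilon^t:=\mathbb{E}\|y^t-(\mathbf 1_n\otimes I_d)\bar y^t\|^2$. Norms are Euclidean. Assumptions. (A1) $\inf_{x}U(x)>-\infty$. (A2) With $\mathcal H^t$ the history generated by $\{\xi_i^\tau\}_{i\le n,\tau\le t-1}$, $\mathbb{E}[\nabla f_i(x^t,\xi_i^t)\mid\mathcal H^t]=\nabla u_i(x^t)$. (A3) $\mathbb{E}\|\nabla f_i(x,\xi_i^t)-\nabla u_i(x)\|^2\le\sigma_i^2$ for all $x$; $\bar\sigma^2:=\sum_i\sigma_i^2$. (A4) $\mathbb{E}\|\nabla f_i(x,\xi)-\nabla f_i(y,\xi)\|^2\le L^2\|x-y\|^2$ for all $x,y$. (A7) The graph is undirected and connected, $W$ is doubly stochastic, $W_{ii}>0$ for all $i$, and for $i\ne j$, $W_{ij}>0$ if $(i,j)\in\mathcal E$ and $W_{ij}=0$ otherwise. *)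

theory Defs
  imports "HOL-Analysis.Analysis" "HOL-Probability.Probability"
begin

definition grad :: "('a::euclidean_space \<Rightarrow> real) \<Rightarrow> 'a \<Rightarrow> 'a" where
  "grad f x = (SOME g. (f has_derivative (\<lambda>h. g \<bullet> h)) (at x))"

definition strongly_convex_on :: "real \<Rightarrow> 'a::real_normed_vector set \<Rightarrow> ('a \<Rightarrow> real) \<Rightarrow> bool" where
  "strongly_convex_on mu S f \<longleftrightarrow> convex S \<and>
     (\<forall>x\<in>S. \<forall>y\<in>S. \<forall>a::real. 0 \<le> a \<and> a \<le> 1 \<longrightarrow>
        f ((1 - a) *\<^sub>R x + a *\<^sub>R y) \<le> (1 - a) * f x + a * f y - mu / 2 * a * (1 - a) * (norm (x - y))^2)"

definition Jmat :: "real^'n::finite^'n" where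
  "Jmat = (\<chi> i j. 1 / real CARD('n))"

definition lambdaW :: "real^'n::finite^'n \<Rightarrow> real" where
  "lambdaW W = onorm (\<lambda>v. (W - Jmat) *v v)"

definition avg :: "('n::finite \<Rightarrow> 'a::real_vector) \<Rightarrow> 'a" where
  "avg x = (1 / real CARD('n)) *\<^sub>R (\<Sum>i\<in>UNIV. x i)"

definition sqnorm_stack :: "('n::finite \<Rightarrow> 'a::real_normed_vector) \<Rightarrow> real" where
  "sqnorm_stack x = (\<Sum>i\<in>UNIV. (norm (x i))^2)"

text \<open>(theta^t)^2 = ||x - 1 (x) xbar||^2.\<close>
definition consensus_sq :: "('n::finite \<Rightarrow> 'a::real_normed_vector) \<Rightarrow> real" where
  "consensus_sq x = sqnorm_stack (\<lambda>i. x i - avg x)"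

definition assumption_A7 :: "('n::finite \<times> 'n) set \<Rightarrow> real^'n^'n \<Rightarrow> bool" where
  "assumption_A7 E W \<longleftrightarrow>
     sym E \<and> (\<forall>i j. (i, j) \<in> E\<^sup>*) \<and>
     (\<forall>i j. 0 \<le> W $ i $ j) \<and>
     (\<forall>i. (\<Sum>j\<in>UNIV. W $ i $ j) = 1) \<and> (\<forall>j. (\<Sum>i\<in>UNIV. W $ i $ j) = 1) \<and>
     (\<forall>i. W $ i $ i > 0) \<and>
     (\<forall>i j. i \<noteq> j \<longrightarrow> (W $ i $ j > 0 \<longleftrightarrow> (i, j) \<in> E))"

text \<open>The iterates (x, xhat, y, z), on every sample path omega, are generated by D-MSSCA
  with data f (stochastic losses), fhat (surrogates), h, g, weight matrix W, parameters
  alpha, beta, mu, b0, initial batch samples xib i r (r = 1..b0) and samples xi i t (t \<ge> 1),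
  where xi i 1 = xib i 1. Stacked vectors are functions 'n \<Rightarrow> real^'d.
  The convention z^0 = 0 and grad f_i(x_i^0, xi_i^1) = 0 means the correction term
  in ftilde vanishes at t = 1.\<close>
definition dmssca_run ::
  "('n::finite \<Rightarrow> real^'d \<Rightarrow> 's \<Rightarrow> real) \<Rightarrow>
   ('n \<Rightarrow> real^'d \<Rightarrow> 's \<Rightarrow> real^'d \<Rightarrow> real) \<Rightarrow>
   (real^'d \<Rightarrow> real) \<Rightarrow> (real^'d \<Rightarrow> real) \<Rightarrow> real^'n^'n \<Rightarrow>
   real \<Rightarrow> real \<Rightarrow> real \<Rightarrow> nat \<Rightarrow>
   ('n \<Rightarrow> nat \<Rightarrow> 'w \<Rightarrow> 's) \<Rightarrow> ('n \<Rightarrow> nat \<Rightarrow> 'w \<Rightarrow> 's) \<Rightarrow>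
   (nat \<Rightarrow> 'w \<Rightarrow> 'n \<Rightarrow> real^'d) \<Rightarrow> (nat \<Rightarrow> 'w \<Rightarrow> 'n \<Rightarrow> real^'d) \<Rightarrow>
   (nat \<Rightarrow> 'w \<Rightarrow> 'n \<Rightarrow> real^'d) \<Rightarrow> (nat \<Rightarrow> 'w \<Rightarrow> 'n \<Rightarrow> real^'d) \<Rightarrow> bool" where
  "dmssca_run f fhat h g W alpha beta mu b0 xib xi x xhat y z \<longleftrightarrow>
    (let X = {v. g v \<le> 0} in
     0 < alpha \<and> alpha < 1 \<and> 0 < beta \<and> beta < 1 \<and> 0 < mu \<and> 1 \<le> b0 \<and>
     convex_on UNIV h \<and> convex_on UNIV g \<and>
     (\<forall>i v s. (\<lambda>u. f i u s) differentiable (at v)) \<and>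
     (\<forall>i v s. strongly_convex_on mu UNIV (fhat i v s)) \<and>
     (\<forall>i v s. (fhat i v s has_derivative (\<lambda>k. grad (\<lambda>u. f i u s) v \<bullet> k)) (at v)) \<and>
     (\<forall>i w. xib i 1 w = xi i 1 w) \<and>
     (\<forall>w. \<exists>xb. xb \<in> X \<and> (\<forall>i. x 1 w i = xb)) \<and>
     (\<forall>w i. z 1 w i = (1 / real b0) *\<^sub>R (\<Sum>r=1..b0. grad (\<lambda>u. f i u (xib i r w)) (x 1 w i))) \<and>
     (\<forall>w i. y 1 w i = z 1 w i) \<and>
     (\<forall>t\<ge>1. \<forall>w i.
        let corr = (if t = 1 then 0
                    else z (t - 1) w i - grad (\<lambda>u. f i u (xi i t w)) (x (t - 1) w i));
            obj = (\<lambda>v. fhat i (x t w i) (xi i t w) v + (1 - beta) * (corr \<bullet> (v - x t w i))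
                        + (y t w i - z t w i) \<bullet> (v - x t w i) + h v)
        in xhat t w i \<in> X \<and> (\<forall>v\<in>X. obj (xhat t w i) \<le> obj v)) \<and>
     (\<forall>t\<ge>1. \<forall>w i. x (t + 1) w i =
        (\<Sum>j\<in>UNIV. W $ i $ j *\<^sub>R (x t w j + alpha *\<^sub>R (xhat t w j - x t w j)))) \<and>
     (\<forall>t\<ge>1. \<forall>w i. z (t + 1) w i =
        grad (\<lambda>u. f i u (xi i (t + 1) w)) (x (t + 1) w i)
        + (1 - beta) *\<^sub>R (z t w i - grad (\<lambda>u. f i u (xi i (t + 1) w)) (x t w i))) \<and>
     (\<forall>t\<ge>1. \<forall>w i. y (t + 1) w i =
        (\<Sum>j\<in>UNIV. W $ i $ j *\<^sub>R (y t w j + z (t + 1) w j - z t w j))))"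

end

theory Submission
  imports Defs
begin

lemma sqnorm_vec_real: "(norm (u::real^'n))^2 = (\<Sum>i\<in>UNIV. (u$i)^2)"
  unfolding power2_norm_eq_inner inner_vec_def by (simp add: power2_eq_square)

lemma sqnorm_mat: "(norm (x::real^'d^'n))^2 = (\<Sum>i\<in>UNIV. \<Sum>k\<in>UNIV. (x$i$k)^2)"
  unfolding power2_norm_eq_inner inner_vec_def by (simp add: power2_eq_square)

lemma variance_identity:
  fixes p u :: "'n::finite \<Rightarrow> real"
  assumes "sum p UNIV = 1"
  shows "(\<Sum>j\<in>UNIV. p j * (u j)^2) - (\<Sum>j\<in>UNIV. p j * u j)^2
     = (1/2) * (\<Sum>j\<in>UNIV. \<Sum>k\<in>UNIV. p j * p k * (u j - u k)^2)"
proof -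
  define A where "A = (\<Sum>j\<in>UNIV. p j * (u j)^2)"
  define B where "B = (\<Sum>j\<in>UNIV. p j * u j)"
  have "(\<Sum>j\<in>UNIV. \<Sum>k\<in>UNIV. p j * p k * (u j - u k)^2)
     = (\<Sum>j\<in>UNIV. \<Sum>k\<in>UNIV. (p j * (u j)^2) * p k + p j * (p k * (u k)^2) - 2 * ((p j * u j) * (p k * u k)))"
    by (intro sum.cong refl) (simp add: power2_diff algebra_simps)
  also have "\<dots> = (\<Sum>j\<in>UNIV. (p j * (u j)^2) * sum p UNIV + p j * A - 2 * ((p j * u j) * B))"
    unfolding A_def B_def
    by (intro sum.cong refl) (simp add: sum.distrib sum_subtractf sum_distrib_left[symmetric] mult.assoc)
  also have "\<dots> = (\<Sum>j\<in>UNIV. p j * (u j)^2) * sum p UNIV + sum p UNIV * A - 2 * ((\<Sum>j\<in>UNIV. p j * u j) * B)"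
    by (simp add: sum.distrib sum_subtractf flip: sum_distrib_right sum_distrib_left)
  also have "\<dots> = A + A - 2 * (B * B)"
    using assms unfolding A_def[symmetric] B_def[symmetric] by simp
  finally show ?thesis unfolding A_def[symmetric] B_def[symmetric] by (simp add: power2_eq_square)
qed

lemma norm_Wu_identity:
  fixes W :: "real^'n::finite^'n" and u :: "real^'n"
  assumes rows: "\<And>i. (\<Sum>j\<in>UNIV. W$i$j) = 1" and cols: "\<And>j. (\<Sum>i\<in>UNIV. W$i$j) = 1"
  shows "(norm u)^2 - (norm (W *v u))^2
     = (1/2) * (\<Sum>i\<in>UNIV. \<Sum>j\<in>UNIV. \<Sum>k\<in>UNIV. W$i$j * W$i$k * (u$j - u$k)^2)"
proof -
  have "(norm u)^2 = (\<Sum>j\<in>UNIV. (\<Sum>i\<in>UNIV. W$i$j) * (u$j)^2)"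
    using cols by (simp add: sqnorm_vec_real)
  also have "\<dots> = (\<Sum>j\<in>UNIV. \<Sum>i\<in>UNIV. W$i$j * (u$j)^2)"
    by (simp add: sum_distrib_right)
  also have "\<dots> = (\<Sum>i\<in>UNIV. \<Sum>j\<in>UNIV. W$i$j * (u$j)^2)"
    by (rule sum.swap)
  finally have 1: "(norm u)^2 = (\<Sum>i\<in>UNIV. \<Sum>j\<in>UNIV. W$i$j * (u$j)^2)" .
  have 2: "(norm (W *v u))^2 = (\<Sum>i\<in>UNIV. (\<Sum>j\<in>UNIV. W$i$j * u$j)^2)"
    by (simp add: sqnorm_vec_real matrix_vector_mult_def)
  have "(norm u)^2 - (norm (W *v u))^2 =
     (\<Sum>i\<in>UNIV. (\<Sum>j\<in>UNIV. W$i$j * (u$j)^2) - (\<Sum>j\<in>UNIV. W$i$j * u$j)^2)"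
    unfolding 1 2 by (simp add: sum_subtractf)
  also have "\<dots> = (\<Sum>i\<in>UNIV. (1/2) * (\<Sum>j\<in>UNIV. \<Sum>k\<in>UNIV. W$i$j * W$i$k * (u$j - u$k)^2))"
    by (intro sum.cong refl variance_identity rows)
  finally show ?thesis by (simp add: sum_distrib_left)
qed

lemma mulv_scaleR: "(W::real^'n::finite^'m::finite) *v (r *\<^sub>R u) = r *\<^sub>R (W *v u)"
  by (simp add: matrix_vector_mult_def vec_eq_iff sum_distrib_left algebra_simps)

lemma W_facts:
  assumes "assumption_A7 E (W::real^'n::finite^'n)"
  shows W_nonneg: "\<And>i j. 0 \<le> W$i$j" and W_rows: "\<And>i. (\<Sum>j\<in>UNIV. W$i$j) = 1"
    and W_cols: "\<And>j. (\<Sum>i\<in>UNIV. W$i$j) = 1" and W_diag: "\<And>i. W$i$i > 0"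
    and W_edge: "\<And>i j. i \<noteq> j \<Longrightarrow> (i,j) \<in> E \<Longrightarrow> W$i$j > 0"
    and W_conn: "\<And>i j. (i,j) \<in> E\<^sup>*"
  using assms unfolding assumption_A7_def by auto

lemma W_le:
  assumes "assumption_A7 E (W::real^'n::finite^'n)"
  shows "norm (W *v u) \<le> norm u"
proof -
  have "0 \<le> (\<Sum>i\<in>UNIV. \<Sum>j\<in>UNIV. \<Sum>k\<in>UNIV. W$i$j * W$i$k * (u$j - u$k)^2)"
    using W_nonneg[OF assms] by (intro sum_nonneg) simp
  then have "(norm (W *v u))^2 \<le> (norm u)^2"
    using norm_Wu_identity[of W u, OF W_rows[OF assms] W_cols[OF assms]] by linarith
  then show ?thesis by (rule power2_le_imp_le) simp
qed

lemma W_eq_zero: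
  assumes A: "assumption_A7 E (W::real^'n::finite^'n)"
    and s: "(\<Sum>i\<in>UNIV. u$i) = 0" and e: "norm (W *v u) = norm u"
  shows "u = 0"
proof -
  have "(\<Sum>i\<in>UNIV. \<Sum>j\<in>UNIV. \<Sum>k\<in>UNIV. W$i$j * W$i$k * (u$j - u$k)^2) = 0"
    using norm_Wu_identity[of W u, OF W_rows[OF A] W_cols[OF A]] e by simp
  then have z: "W$i$j * W$i$k * (u$j - u$k)^2 = 0" for i j k
  proof -
    assume h: "(\<Sum>i\<in>UNIV. \<Sum>j\<in>UNIV. \<Sum>k\<in>UNIV. W$i$j * W$i$k * (u$j - u$k)^2) = 0"
    have nn: "0 \<le> W$i$j * W$i$k * (u$j - u$k)^2" for i j k using W_nonneg[OF A] by simp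
    have nn2: "0 \<le> (\<Sum>k\<in>UNIV. W$i$j * W$i$k * (u$j - u$k)^2)" for i j by (rule sum_nonneg) (rule nn)
    have nn3: "0 \<le> (\<Sum>j\<in>UNIV. \<Sum>k\<in>UNIV. W$i$j * W$i$k * (u$j - u$k)^2)" for i by (rule sum_nonneg) (rule nn2)
    have "(\<Sum>j\<in>UNIV. \<Sum>k\<in>UNIV. W$i$j * W$i$k * (u$j - u$k)^2) = 0"
      using h sum_nonneg_eq_0_iff[of UNIV "\<lambda>i. \<Sum>j\<in>UNIV. \<Sum>k\<in>UNIV. W$i$j * W$i$k * (u$j - u$k)^2"] nn3 by simp
    then have "(\<Sum>k\<in>UNIV. W$i$j * W$i$k * (u$j - u$k)^2) = 0"
      using sum_nonneg_eq_0_iff[of UNIV "\<lambda>j. \<Sum>k\<in>UNIV. W$i$j * W$i$k * (u$j - u$k)^2"] nn2 by simp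
    then show ?thesis
      using sum_nonneg_eq_0_iff[of UNIV "\<lambda>k. W$i$j * W$i$k * (u$j - u$k)^2"] nn by simp blast
  qed
  have edge: "u$i = u$k" if "(i,k) \<in> E" for i k
  proof (cases "i = k")
    case False
    have "W$i$i * W$i$k > 0" using W_diag[OF A] W_edge[OF A False that] by simp
    then show ?thesis using z[of i i k] by (auto simp: mult_pos_pos)
  qed simp
  have path: "u$i = u$k" if "(i,k) \<in> E\<^sup>*" for i k
    using that
  proof (induction rule: rtrancl_induct)
    case (step y z)
    then show ?case using edge[of y z] by simp
  qed simp
  fix i0 :: 'n
  have eq: "u$i = u$i0" for i by (rule path[OF W_conn[OF A]])
  have "(\<Sum>i\<in>UNIV. u$i) = (\<Sum>i::'n\<in>UNIV. u$i0)" by (rule sum.cong[OF refl], rule eq)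
  then have "(\<Sum>i\<in>UNIV. u$i) = real CARD('n) * u$i0" by simp
  then have z0: "u$i0 = 0" using s by simp
  show ?thesis
  proof (rule iffD2[OF vec_eq_iff], intro allI)
    fix i show "u$i = 0$i" using eq[of i] z0 by simp
  qed
qed

lemma W_contract:
  assumes A: "assumption_A7 E (W::real^'n::finite^'n)"
  shows "\<exists>c. 0 \<le> c \<and> c < 1 \<and> (\<forall>u. (\<Sum>i\<in>UNIV. u$i) = 0 \<longrightarrow> norm (W *v u) \<le> c * norm u)"
proof -
  define S where "S = {u::real^'n. (\<Sum>i\<in>UNIV. u$i) = 0 \<and> norm u = 1}"
  have key: "\<exists>c. 0 \<le> c \<and> c < 1 \<and> (\<forall>v\<in>S. norm (W *v v) \<le> c)"
  proof (cases "S = {}")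
    case True then show ?thesis by (intro exI[of _ 0]) auto
  next
    case False
    have "S = {u. (\<Sum>i\<in>UNIV. u$i) = 0} \<inter> {u. norm u = 1}" unfolding S_def by auto
    moreover have "closed {u::real^'n. (\<Sum>i\<in>UNIV. u$i) = 0}"
    proof -
      have "bounded_linear (\<lambda>u::real^'n. \<Sum>i\<in>UNIV. u$i)" by (rule bounded_linear_sum) (rule bounded_linear_vec_nth)
      then show ?thesis by (intro closed_Collect_eq linear_continuous_on continuous_on_const)
    qed
    moreover have "closed {u::real^'n. norm u = 1}"
      by (rule closed_Collect_eq, rule continuous_on_norm, rule continuous_on_id, rule continuous_on_const)
    ultimately have "closed S" by auto
    moreover have "bounded S" by (rule bounded_subset[OF bounded_cball[of 0 1]]) (auto simp: S_def)
    ultimately have "compact S" by (simp add: compact_eq_bounded_closed)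
    moreover have "continuous_on S (\<lambda>v. norm (W *v v))"
      by (rule continuous_on_norm, rule linear_continuous_on, rule matrix_vector_mul_bounded_linear)
    ultimately obtain v0 where v0: "v0 \<in> S" "\<And>v. v \<in> S \<Longrightarrow> norm (W *v v) \<le> norm (W *v v0)"
      using continuous_attains_sup[OF _ False] by metis
    have "norm (W *v v0) \<le> 1" using W_le[OF A, of v0] v0(1) by (simp add: S_def)
    moreover have "norm (W *v v0) \<noteq> 1"
    proof
      assume "norm (W *v v0) = 1"
      then have "v0 = 0" using W_eq_zero[OF A] v0(1) by (auto simp: S_def)
      then show False using v0(1) by (simp add: S_def)
    qed
    ultimately show ?thesis using v0 by (intro exI[of _ "norm (W *v v0)"]) auto
  qed
  then obtain c where c: "0 \<le> c" "c < 1" "\<And>v. v \<in> S \<Longrightarrow> norm (W *v v) \<le> c" by blast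
  have "norm (W *v u) \<le> c * norm u" if s: "(\<Sum>i\<in>UNIV. u$i) = 0" for u
  proof (cases "u = 0")
    case False
    define v where "v = (1 / norm u) *\<^sub>R u"
    have "(\<Sum>i\<in>UNIV. v$i) = (1 / norm u) * (\<Sum>i\<in>UNIV. u$i)"
      by (simp add: v_def sum_distrib_left)
    then have "v \<in> S" using False s by (simp add: S_def v_def)
    then have "norm (W *v v) \<le> c" by (rule c(3))
    moreover have "W *v u = norm u *\<^sub>R (W *v v)" using False by (simp add: v_def mulv_scaleR)
    ultimately show ?thesis by (simp add: mult.commute[of c] mult_left_mono)
  qed simp
  then show ?thesis using c by blast
qed

lemma Jmat_nth[simp]: "(Jmat::real^'n::finite^'n) $ i $ j = 1 / real CARD('n)"
  by (simp add: Jmat_def)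

lemma lambda_bounds:
  assumes A: "assumption_A7 E (W::real^'n::finite^'n)"
  shows "0 \<le> lambdaW W" "lambdaW W < 1"
proof -
  obtain c where c: "0 \<le> c" "c < 1"
    "\<And>u. (\<Sum>i\<in>UNIV. u$i) = 0 \<Longrightarrow> norm (W *v u) \<le> c * norm u"
    using W_contract[OF A] by blast
  have key: "norm ((W - Jmat) *v v) \<le> c * norm v" for v
  proof -
    define n where "n = real CARD('n)"
    have n0: "n > 0" by (simp add: n_def)
    define a where "a = (\<Sum>j\<in>UNIV. v$j) / n"
    have sv: "(\<Sum>j\<in>UNIV. v$j) = n * a" using n0 by (simp add: a_def)
    define u where "u = v - (\<chi> i. a)"
    have eq1: "(W - Jmat) *v v = W *v u"
    proof -
      have l: "(\<Sum>j\<in>UNIV. (W$i$j - 1/n) * v$j) = (\<Sum>j\<in>UNIV. W$i$j * v$j) - a" for i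
      proof -
        have "(\<Sum>j\<in>UNIV. (W$i$j - 1/n) * v$j) = (\<Sum>j\<in>UNIV. W$i$j * v$j) - (\<Sum>j\<in>UNIV. v$j) / n"
          by (simp add: left_diff_distrib sum_subtractf sum_divide_distrib)
        then show ?thesis by (simp add: a_def)
      qed
      have r: "(\<Sum>j\<in>UNIV. W$i$j * (v$j - a)) = (\<Sum>j\<in>UNIV. W$i$j * v$j) - a" for i
      proof -
        have "(\<Sum>j\<in>UNIV. W$i$j * (v$j - a)) = (\<Sum>j\<in>UNIV. W$i$j * v$j) - (\<Sum>j\<in>UNIV. W$i$j) * a"
          by (simp add: right_diff_distrib sum_subtractf sum_distrib_right)
        then show ?thesis using W_rows[OF A] by simp
      qed
      show ?thesis unfolding u_def using l r
        by (simp add: vec_eq_iff matrix_vector_mult_def n_def)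
    qed
    have su: "(\<Sum>i\<in>UNIV. u$i) = 0"
      unfolding u_def using sv by (simp add: sum_subtractf n_def)
    have "(norm u)^2 = (\<Sum>j\<in>UNIV. (v$j)^2) - 2 * a * (\<Sum>j\<in>UNIV. v$j) + n * a^2"
      unfolding u_def sqnorm_vec_real
      by (simp add: power2_diff sum_subtractf sum.distrib sum_distrib_left n_def mult.assoc mult.commute[of a])
    also have "\<dots> = (norm v)^2 - n * a^2" unfolding sqnorm_vec_real sv by (simp add: power2_eq_square)
    also have "\<dots> \<le> (norm v)^2" using n0 by simp
    finally have "norm u \<le> norm v" by (rule power2_le_imp_le) simp
    then have "c * norm u \<le> c * norm v" using c(1) by (rule mult_left_mono)
    then show ?thesis using eq1 c(3)[OF su] by simp
  qed
  show "lambdaW W < 1"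
    unfolding lambdaW_def using onorm_le[OF key] c(2) by linarith
  show "0 \<le> lambdaW W"
    unfolding lambdaW_def by (rule onorm_pos_le[OF matrix_vector_mul_bounded_linear])
qed

lemma block_norm:
  fixes M :: "real^'n::finite^'n" and B :: "real^'d::finite^'n"
  shows "norm (M ** B) \<le> onorm ((*v) M) * norm B"
proof -
  define l where "l = onorm ((*v) M)"
  have l0: "0 \<le> l" unfolding l_def by (rule onorm_pos_le[OF matrix_vector_mul_bounded_linear])
  define col where "col k = (\<chi> j. B$j$k)" for k
  have A: "(M ** B)$i$k = (M *v col k)$i" for i k
    by (simp add: matrix_matrix_mult_def matrix_vector_mult_def col_def)
  have "(norm (M ** B))^2 = (\<Sum>i\<in>UNIV. \<Sum>k\<in>UNIV. ((M *v col k)$i)^2)"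
    unfolding sqnorm_mat A ..
  also have "\<dots> = (\<Sum>k\<in>UNIV. \<Sum>i\<in>UNIV. ((M *v col k)$i)^2)"
    by (rule sum.swap)
  also have "\<dots> = (\<Sum>k\<in>UNIV. (norm (M *v col k))^2)" by (simp only: sqnorm_vec_real)
  also have "\<dots> \<le> (\<Sum>k\<in>UNIV. (l * norm (col k))^2)"
  proof (rule sum_mono)
    fix k
    have "norm (M *v col k) \<le> l * norm (col k)"
      unfolding l_def by (rule onorm[OF matrix_vector_mul_bounded_linear])
    then show "(norm (M *v col k))^2 \<le> (l * norm (col k))^2"
      by (rule power_mono) simp
  qed
  also have "\<dots> = l^2 * (\<Sum>k\<in>UNIV. (norm (col k))^2)"
    by (simp only: power_mult_distrib sum_distrib_left)
  also have "(\<Sum>k\<in>UNIV. (norm (col k))^2) = (\<Sum>k\<in>UNIV. \<Sum>i\<in>UNIV. (B$i$k)^2)"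
    by (simp only: sqnorm_vec_real col_def vec_lambda_beta)
  also have "\<dots> = (\<Sum>i\<in>UNIV. \<Sum>k\<in>UNIV. (B$i$k)^2)"
    by (rule sum.swap)
  also have "\<dots> = (norm B)^2" by (rule sqnorm_mat[symmetric])
  finally have "(norm (M ** B))^2 \<le> (l * norm B)^2" by (simp only: power_mult_distrib)
  then have "norm (M ** B) \<le> l * norm B"
    by (rule power2_le_imp_le) (simp add: l0)
  then show ?thesis unfolding l_def .
qed

lemma sq_convex_step:
  fixes l a c d :: real
  assumes "0 \<le> l" "l < 1"
  shows "(l * a + c * d)^2 \<le> l * a^2 + c^2 * d^2 / (1 - l)"
proof -
  have p: "0 < 1 - l" using assms by simp
  have e: "(1 - l) * (c^2 * d^2 / (1 - l)) = c^2 * d^2" using p by simp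
  have "(1 - l) * (l * a^2 + c^2 * d^2 / (1 - l) - (l * a + c * d)^2)
      = (1 - l) * (l * a^2) + (1 - l) * (c^2 * d^2 / (1 - l)) - (1 - l) * (l * a + c * d)^2"
    by (simp add: algebra_simps)
  also have "\<dots> = l * ((1 - l) * a - c * d)^2"
    unfolding e by (simp add: power2_eq_square algebra_simps)
  also have "\<dots> \<ge> 0" using assms by simp
  finally have "0 \<le> (1 - l) * (l * a^2 + c^2 * d^2 / (1 - l) - (l * a + c * d)^2)" .
  then have "0 \<le> l * a^2 + c^2 * d^2 / (1 - l) - (l * a + c * d)^2"
    using p by (simp add: zero_le_mult_iff)
  then show ?thesis by simp
qed

lemma scalar_bound:
  fixes a d :: "nat \<Rightarrow> real" and l al :: real and T :: nat
  assumes a1: "a 1 = 0" and rec: "\<And>t. t \<ge> 1 \<Longrightarrow> a (Suc t) \<le> l * (a t + al * d t)"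
    and a0: "\<And>t. 0 \<le> a t" and d0: "\<And>t. 0 \<le> d t"
    and l0: "0 \<le> l" and l1: "l < 1" and al0: "0 \<le> al" and T1: "T \<ge> 1"
  shows "(\<Sum>t=1..T. (a t)^2) \<le> 4 * al^2 * l^2 / (1 - l^2)^2 * (\<Sum>t=1..T-1. (d t)^2)"
proof -
  define K where "K = (al * l)^2 / (1 - l)"
  define S where "S = (\<Sum>t=1..T. (a t)^2)"
  define D where "D = (\<Sum>t=1..T-1. (d t)^2)"
  have step: "(a (Suc t))^2 \<le> l * (a t)^2 + K * (d t)^2" if "t \<ge> 1" for t
  proof -
    have "(a (Suc t))^2 \<le> (l * a t + (al * l) * d t)^2"
      using rec[OF that] a0[of "Suc t"] by (intro power_mono) (auto simp: algebra_simps)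
    also have "\<dots> \<le> l * (a t)^2 + (al * l)^2 * (d t)^2 / (1 - l)"
      by (rule sq_convex_step[OF l0 l1])
    finally show ?thesis by (simp add: K_def)
  qed
  have "S = (a 1)^2 + (\<Sum>t=Suc 1..T. (a t)^2)"
    unfolding S_def using T1 by (simp add: sum.atLeast_Suc_atMost)
  also have "(\<Sum>t=Suc 1..T. (a t)^2) = (\<Sum>t=Suc 1..Suc (T-1). (a t)^2)" using T1 by simp
  also have "\<dots> = (\<Sum>t=1..T-1. (a (Suc t))^2)" by (rule sum.shift_bounds_cl_Suc_ivl)
  finally have "S = (\<Sum>t=1..T-1. (a (Suc t))^2)" using a1 by simp
  also have "\<dots> \<le> (\<Sum>t=1..T-1. l * (a t)^2 + K * (d t)^2)"
    by (intro sum_mono step) auto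
  also have "\<dots> = l * (\<Sum>t=1..T-1. (a t)^2) + K * D"
    by (simp add: sum.distrib sum_distrib_left D_def)
  also have "(\<Sum>t=1..T-1. (a t)^2) \<le> S"
    unfolding S_def by (rule sum_mono2) auto
  hence "l * (\<Sum>t=1..T-1. (a t)^2) + K * D \<le> l * S + K * D" using l0 by (simp add: mult_left_mono)
  finally have "(1 - l) * S \<le> K * D" by (simp add: algebra_simps)
  then have "S \<le> K * D / (1 - l)" using l1 by (simp add: field_simps)
  also have "\<dots> = (al * l)^2 / (1 - l)^2 * D" unfolding K_def by (simp add: power2_eq_square)
  also have "\<dots> \<le> 4 * al^2 * l^2 / (1 - l^2)^2 * D"
  proof (rule mult_right_mono)
    show "0 \<le> D" unfolding D_def by (intro sum_nonneg) simp
    have p: "0 < 1 - l" using l1 by simp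
    have q: "(1 - l^2)^2 = (1 - l)^2 * (1 + l)^2" by (simp add: power2_eq_square algebra_simps)
    have "(1 + l)^2 \<le> 2^2" using l0 l1 by (intro power_mono) auto
    then have "(1 + l)^2 \<le> 4" by simp
    then have "(1 - l^2)^2 \<le> 4 * (1 - l)^2" unfolding q using p by (simp add: mult.commute mult_left_mono)
    moreover have "l * l \<le> l" using l0 l1 by (simp add: mult_left_le_one_le)
    then have "0 < (1 - l^2)^2" using l1 by (simp add: power2_eq_square)
    ultimately have "4 / (4 * (1 - l)^2) \<le> 4 / (1 - l^2)^2" by (intro frac_le) auto
    then have "1 / (1 - l)^2 \<le> 4 / (1 - l^2)^2" by simp
    then have "(al * l)^2 * (1 / (1 - l)^2) \<le> (al * l)^2 * (4 / (1 - l^2)^2)"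
      by (rule mult_left_mono) simp
    then show "(al * l)^2 / (1 - l)^2 \<le> 4 * al^2 * l^2 / (1 - l^2)^2"
      by (simp add: power_mult_distrib mult_ac)
  qed
  finally show ?thesis unfolding S_def D_def .
qed

lemma stack_norm: "(norm (\<chi> i. f i))^2 = sqnorm_stack (f::'n::finite \<Rightarrow> real^'d::finite)"
  unfolding sqnorm_stack_def power2_norm_eq_inner inner_vec_def by simp

lemma avg_nth: "avg (f::'n::finite \<Rightarrow> real^'d::finite) $ k = (\<Sum>i\<in>UNIV. f i $ k) / real CARD('n)"
  by (simp add: avg_def)

lemma consensus_step:
  fixes W :: "real^'n::finite^'n" and x xh x' :: "'n \<Rightarrow> real^'d::finite"
  assumes rows: "\<And>i. (\<Sum>j\<in>UNIV. W$i$j) = 1" and cols: "\<And>j. (\<Sum>i\<in>UNIV. W$i$j) = 1"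
    and upd: "\<And>i. x' i = (\<Sum>j\<in>UNIV. W $ i $ j *\<^sub>R (x j + al *\<^sub>R (xh j - x j)))"
  shows "(\<chi> i. x' i - avg x') = (W - Jmat) ** ((\<chi> i. x i - avg x) + al *\<^sub>R (\<chi> i. xh i - x i))"
proof -
  define n where "n = real CARD('n)"
  have n0: "n > 0" by (simp add: n_def)
  have comp: "x' i $ k - avg x' $ k = (\<Sum>j\<in>UNIV. (W$i$j - 1/n) * (x j $ k - avg x $ k + al * (xh j $ k - x j $ k)))"
    for i k
  proof -
    define V where "V j = x j $ k + al * (xh j $ k - x j $ k)" for j
    define c where "c = avg x $ k"
    have x'k: "x' i $ k = (\<Sum>j\<in>UNIV. W$i$j * V j)" for i
      unfolding upd V_def by simp
    have "avg x' $ k = (\<Sum>i\<in>UNIV. \<Sum>j\<in>UNIV. W$i$j * V j) / n"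
      unfolding avg_nth x'k n_def ..
    also have "(\<Sum>i\<in>UNIV. \<Sum>j\<in>UNIV. W$i$j * V j) = (\<Sum>j\<in>UNIV. \<Sum>i\<in>UNIV. W$i$j * V j)"
      by (rule sum.swap)
    also have "\<dots> = (\<Sum>j\<in>UNIV. V j)"
      by (simp add: sum_distrib_right[symmetric] cols)
    finally have av: "avg x' $ k = (\<Sum>j\<in>UNIV. V j) / n" .
    have pt: "(W$i$j - 1/n) * (V j - c) = (W$i$j * V j - V j / n) - c * (W$i$j - 1/n)" for j
      by (simp add: algebra_simps)
    have "(\<Sum>j\<in>UNIV. (W$i$j - 1/n) * (V j - c))
        = (\<Sum>j\<in>UNIV. W$i$j * V j - V j / n) - (\<Sum>j\<in>UNIV. c * (W$i$j - 1/n))"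
      unfolding pt by (rule sum_subtractf)
    also have "(\<Sum>j\<in>UNIV. W$i$j * V j - V j / n) = (\<Sum>j\<in>UNIV. W$i$j * V j) - (\<Sum>j\<in>UNIV. V j) / n"
      by (simp only: sum_subtractf sum_divide_distrib)
    also have "(\<Sum>j\<in>UNIV. c * (W$i$j - 1/n)) = c * ((\<Sum>j\<in>UNIV. W$i$j) - (\<Sum>j::'n\<in>UNIV. 1/n))"
      by (simp only: sum_distrib_left[symmetric] sum_subtractf)
    also have "(\<Sum>j::'n\<in>UNIV. 1/n) = 1" using n0 by (simp add: n_def)
    finally have "(\<Sum>j\<in>UNIV. (W$i$j - 1/n) * (V j - c)) = x' i $ k - avg x' $ k"
      using rows x'k av by simp
    moreover have "(\<Sum>j\<in>UNIV. (W$i$j - 1/n) * (V j - c))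
       = (\<Sum>j\<in>UNIV. (W$i$j - 1/n) * (x j $ k - avg x $ k + al * (xh j $ k - x j $ k)))"
      by (intro sum.cong refl) (simp add: V_def c_def algebra_simps)
    ultimately show ?thesis by simp
  qed
  show ?thesis
    by (simp add: vec_eq_iff matrix_matrix_mult_def comp n_def)
qed

theorem lemma6:
  fixes M :: "'w measure"
    and f :: "'n::finite \<Rightarrow> real^'d \<Rightarrow> 's \<Rightarrow> real"
    and fhat :: "'n \<Rightarrow> real^'d \<Rightarrow> 's \<Rightarrow> real^'d \<Rightarrow> real"
    and h g :: "real^'d \<Rightarrow> real"
    and W :: "real^'n^'n" and E :: "('n \<times> 'n) set"
    and alpha beta mu :: real and b0 :: nat
    and xib xi :: "'n \<Rightarrow> nat \<Rightarrow> 'w \<Rightarrow> 's"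
    and x xhat y z :: "nat \<Rightarrow> 'w \<Rightarrow> 'n \<Rightarrow> real^'d"
    and T :: nat
  assumes "prob_space M"
    and "assumption_A7 E W"
    and "dmssca_run f fhat h g W alpha beta mu b0 xib xi x xhat y z"
    and "\<And>t i. (\<lambda>w. x t w i) \<in> borel_measurable M"
    and "\<And>t i. (\<lambda>w. xhat t w i) \<in> borel_measurable M"
    and "T > 1"
  shows "(\<Sum>t=1..T. \<integral>\<^sup>+ w. ennreal (consensus_sq (x t w)) \<partial>M)
         \<le> ennreal (4 * alpha^2 * (lambdaW W)^2 / (1 - (lambdaW W)^2)^2)
           * (\<Sum>t=1..T-1. \<integral>\<^sup>+ w. ennreal (sqnorm_stack (\<lambda>i. xhat t w i - x t w i)) \<partial>M)"
proof -
  have alpha0: "0 < alpha" and x1: "\<forall>w. \<exists>xb. xb \<in> {v. g v \<le> 0} \<and> (\<forall>i. x 1 w i = xb)"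
    and upd: "\<forall>t\<ge>1. \<forall>w i. x (t + 1) w i =
        (\<Sum>j\<in>UNIV. W $ i $ j *\<^sub>R (x t w j + alpha *\<^sub>R (xhat t w j - x t w j)))"
    using assms(3) unfolding dmssca_run_def Let_def by blast+
  define l where "l = lambdaW W"
  have l0: "0 \<le> l" and l1: "l < 1" using lambda_bounds[OF assms(2)] by (auto simp: l_def)
  define C where "C = 4 * alpha^2 * (lambdaW W)^2 / (1 - (lambdaW W)^2)^2"
  have C0: "0 \<le> C" unfolding C_def by simp
  have path: "(\<Sum>t=1..T. consensus_sq (x t w))
      \<le> C * (\<Sum>t=1..T-1. sqnorm_stack (\<lambda>i. xhat t w i - x t w i))" for w
  proof -
    define e where "e t = (\<chi> i. x t w i - avg (x t w))" for t
    define D where "D t = (\<chi> i. xhat t w i - x t w i)" for t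
    have cs: "consensus_sq (x t w) = (norm (e t))^2" for t
      by (simp add: consensus_sq_def e_def stack_norm)
    have sq: "sqnorm_stack (\<lambda>i. xhat t w i - x t w i) = (norm (D t))^2" for t
      by (simp add: D_def stack_norm)
    have rec: "norm (e (Suc t)) \<le> l * (norm (e t) + alpha * norm (D t))" if t1: "t \<ge> 1" for t
    proof -
      have "e (Suc t) = (W - Jmat) ** (e t + alpha *\<^sub>R D t)"
        unfolding e_def D_def
        by (rule consensus_step[OF W_rows[OF assms(2)] W_cols[OF assms(2)]])
           (use upd t1 in \<open>simp\<close>)
      then have "norm (e (Suc t)) \<le> l * norm (e t + alpha *\<^sub>R D t)"
        using block_norm[of "W - Jmat" "e t + alpha *\<^sub>R D t"] by (simp add: l_def lambdaW_def)
      also have "\<dots> \<le> l * (norm (e t) + alpha * norm (D t))"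
        using l0 alpha0 norm_triangle_ineq[of "e t" "alpha *\<^sub>R D t"]
        by (intro mult_left_mono) auto
      finally show ?thesis .
    qed
    have e1: "e 1 = 0"
    proof -
      obtain xb where xb: "\<And>i. x 1 w i = xb" using x1 by blast
      have xb': "x (Suc 0) w i = xb" for i using xb[of i] by simp
      have "avg (x 1 w) = xb" by (simp add: vec_eq_iff avg_nth xb')
      then show ?thesis unfolding e_def xb by (simp add: vec_eq_iff)
    qed
    have "(\<Sum>t=1..T. (norm (e t))^2) \<le> 4 * alpha^2 * l^2 / (1 - l^2)^2 * (\<Sum>t=1..T-1. (norm (D t))^2)"
    proof (rule scalar_bound[of "\<lambda>t. norm (e t)" l alpha "\<lambda>t. norm (D t)" T])
      show "norm (e 1) = 0" using e1 by simp
      show "\<And>t. 1 \<le> t \<Longrightarrow> norm (e (Suc t)) \<le> l * (norm (e t) + alpha * norm (D t))" by (rule rec)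
      show "\<And>t. 0 \<le> norm (e t)" by simp
      show "\<And>t. 0 \<le> norm (D t)" by simp
      show "0 \<le> l" by (rule l0)
      show "l < 1" by (rule l1)
      show "0 \<le> alpha" using alpha0 by simp
      show "1 \<le> T" using assms(6) by simp
    qed
    moreover have "(\<Sum>t=1..T. consensus_sq (x t w)) = (\<Sum>t=1..T. (norm (e t))^2)"
      by (rule sum.cong[OF refl]) (rule cs)
    moreover have "(\<Sum>t=1..T-1. sqnorm_stack (\<lambda>i. xhat t w i - x t w i)) = (\<Sum>t=1..T-1. (norm (D t))^2)"
      by (rule sum.cong[OF refl]) (rule sq)
    ultimately show ?thesis unfolding C_def l_def by simp
  qed
  have m1: "(\<lambda>w. consensus_sq (x t w)) \<in> borel_measurable M" for t
    unfolding consensus_sq_def sqnorm_stack_def avg_def using assms(4) by measurable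
  have m2: "(\<lambda>w. sqnorm_stack (\<lambda>i. xhat t w i - x t w i)) \<in> borel_measurable M" for t
    unfolding sqnorm_stack_def using assms(4,5) by measurable
  have nn1: "0 \<le> consensus_sq (x t w)" for t w
    unfolding consensus_sq_def sqnorm_stack_def by (simp add: sum_nonneg)
  have nn2: "0 \<le> sqnorm_stack (\<lambda>i. xhat t w i - x t w i)" for t w
    unfolding sqnorm_stack_def by (simp add: sum_nonneg)
  have "(\<Sum>t=1..T. \<integral>\<^sup>+ w. ennreal (consensus_sq (x t w)) \<partial>M)
      = (\<integral>\<^sup>+ w. (\<Sum>t=1..T. ennreal (consensus_sq (x t w))) \<partial>M)"
    by (rule nn_integral_sum[symmetric]) (use m1 in measurable)
  also have "\<dots> = (\<integral>\<^sup>+ w. ennreal (\<Sum>t=1..T. consensus_sq (x t w)) \<partial>M)"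
    using nn1 by simp
  also have "\<dots> \<le> (\<integral>\<^sup>+ w. ennreal (C * (\<Sum>t=1..T-1. sqnorm_stack (\<lambda>i. xhat t w i - x t w i))) \<partial>M)"
    by (intro nn_integral_mono ennreal_leI path)
  also have "\<dots> = (\<integral>\<^sup>+ w. ennreal C * ennreal (\<Sum>t=1..T-1. sqnorm_stack (\<lambda>i. xhat t w i - x t w i)) \<partial>M)"
    using C0 by (simp add: ennreal_mult')
  also have "\<dots> = ennreal C * (\<integral>\<^sup>+ w. ennreal (\<Sum>t=1..T-1. sqnorm_stack (\<lambda>i. xhat t w i - x t w i)) \<partial>M)"
    by (rule nn_integral_cmult) (use m2 in measurable)
  also have "(\<integral>\<^sup>+ w. ennreal (\<Sum>t=1..T-1. sqnorm_stack (\<lambda>i. xhat t w i - x t w i)) \<partial>M)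
      = (\<integral>\<^sup>+ w. (\<Sum>t=1..T-1. ennreal (sqnorm_stack (\<lambda>i. xhat t w i - x t w i))) \<partial>M)"
    using nn2 by simp
  also have "\<dots> = (\<Sum>t=1..T-1. \<integral>\<^sup>+ w. ennreal (sqnorm_stack (\<lambda>i. xhat t w i - x t w i)) \<partial>M)"
    by (rule nn_integral_sum) (use m2 in measurable)
  finally show ?thesis unfolding C_def .
qed

end
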